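(* Let $\beta=(\beta_n)_{n\ge0}$ be a non-increasing sequence of positive numbers with $\liminf_n\beta_n^{1/n}\ge1$, and let $I_1(z)=\exp\big(-\frac{1+z}{1-z}\big)$. If the composition operator $C_{I_1}$ maps $H^2(\beta)$ into itself, then $\beta$ satisfies the $\Delta_2$-condition.
   Context: $H^2(\beta)$ is the Hilbert space of analytic functions $f(z)=\sum_{n\ge0}a_nz^n$ on the unit disk $\mathbb D$ with $\|f\|^2=\sum_{n\ge0}|a_n|^2\beta_n<\infty$; $C_{I_1}f=f\circ I_1$. $\beta$ satisfies the $\Delta_2$-condition if there is $\delta\in(0,1)$ with $\beta_{2n}\ge\delta\beta_n$ for all $n\ge0$. *)

theory Defs
  imports "HOL-Analysis.Analysis"
begin

text \<open>A function is identified with its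
  values on the open unit disk (values outside the disk are irrelevant).\<close>
definition H2 :: "(nat \<Rightarrow> real) \<Rightarrow> (complex \<Rightarrow> complex) set" where
  "H2 \<beta> = {f. \<exists>a :: nat \<Rightarrow> complex.
              summable (\<lambda>n. (cmod (a n))^2 * \<beta> n) \<and>
              (\<forall>z\<in>ball 0 1. (\<lambda>n. a n * z ^ n) sums f z)}"

definition I1 :: "complex \<Rightarrow> complex" where
  "I1 z = exp (- ((1 + z) / (1 - z)))"

definition Delta2 :: "(nat \<Rightarrow> real) \<Rightarrow> bool" where
  "Delta2 \<beta> \<longleftrightarrow> (\<exists>\<delta>. 0 < \<delta> \<and> \<delta> < 1 \<and> (\<forall>n. \<beta> (2 * n) \<ge> \<delta> * \<beta> n))"

end

theory Submission
  imports Defs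
begin


lemma sumA:
  fixes \<beta> :: "nat \<Rightarrow> real"
  assumes pos: "\<And>n. \<beta> n > 0"
    and lim: "Liminf sequentially (\<lambda>n. ereal (root n (\<beta> n))) \<ge> 1"
    and r: "0 \<le> \<rho>" "\<rho> < 1"
  shows "summable (\<lambda>k. \<rho>^k / \<beta> k)"
proof -
  define q where "q = (1+\<rho>)/2"
  have q: "0 < q" "q < 1" "\<rho> < q" using r by (auto simp: q_def)
  have "ereal q < Liminf sequentially (\<lambda>n. ereal (root n (\<beta> n)))"
  proof -
    have "ereal q < 1" using q by simp
    then show ?thesis using lim by (rule less_le_trans)
  qed
  from less_LiminfD[OF this] have ev: "eventually (\<lambda>n. q < root n (\<beta> n)) sequentially"
    by simp
  have "eventually (\<lambda>n. norm (\<rho>^n / \<beta> n) \<le> (\<rho>/q)^n) sequentially"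
    using ev eventually_gt_at_top[of 0]
  proof eventually_elim
    case (elim n)
    have "q^n < (root n (\<beta> n))^n"
      using elim q by (intro power_strict_mono) auto
    also have "\<dots> = \<beta> n" using elim pos[of n] by simp
    finally have "q^n < \<beta> n" .
    then have "\<rho>^n / \<beta> n \<le> \<rho>^n / q^n"
      using q r pos[of n] by (intro divide_left_mono) auto
    then show ?case using r pos[of n] by (simp add: power_divide)
  qed
  moreover have "summable (\<lambda>n. (\<rho>/q)^n)"
    using q r by (intro summable_geometric) auto
  ultimately show ?thesis by (rule summable_comparison_test_ev)
qed

lemma CS_series:
  fixes p q :: "nat \<Rightarrow> real"
  assumes "\<And>n. 0 \<le> p n" "\<And>n. 0 \<le> q n"
    and sp: "summable (\<lambda>n. (p n)^2)" and sq: "summable (\<lambda>n. (q n)^2)"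
  shows "summable (\<lambda>n. p n * q n)" "(\<Sum>n. p n * q n)^2 \<le> (\<Sum>n. (p n)^2) * (\<Sum>n. (q n)^2)"
proof -
  have le: "norm (p n * q n) \<le> ((p n)^2 + (q n)^2)/2" for n
  proof -
    have "0 \<le> (p n - q n)^2" by simp
    hence "2*(p n*q n) \<le> (p n)^2 + (q n)^2" by (simp add: power2_diff)
    moreover have "norm (p n * q n) = p n * q n" using assms(1,2)[of n] by simp
    ultimately show ?thesis by simp
  qed
  show s: "summable (\<lambda>n. p n * q n)"
    by (rule summable_comparison_test'[OF summable_divide[OF summable_add[OF sp sq], of 2], of 0]) (use le in auto)
  have lim1: "(\<lambda>N. (\<Sum>n<N. p n * q n)^2) \<longlonglongrightarrow> (\<Sum>n. p n * q n)^2"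
    by (intro tendsto_intros summable_LIMSEQ s)
  have lim2: "(\<lambda>N. (\<Sum>n<N. (p n)^2) * (\<Sum>n<N. (q n)^2)) \<longlonglongrightarrow> (\<Sum>n. (p n)^2) * (\<Sum>n. (q n)^2)"
    by (intro tendsto_intros summable_LIMSEQ sp sq)
  show "(\<Sum>n. p n * q n)^2 \<le> (\<Sum>n. (p n)^2) * (\<Sum>n. (q n)^2)"
    by (rule LIMSEQ_le[OF lim1 lim2]) (auto intro: Cauchy_Schwarz_ineq_sum)
qed

lemma logineq:
  fixes r :: real
  assumes "0 < r" "r \<le> 1"
  shows "ln r + 2 * (1 - r) / (1 + r) \<le> 0"
proof -
  define h where "h = (\<lambda>x::real. ln x + 2 * (1 - x) / (1 + x))"
  have d: "(h has_real_derivative (1/x - 4/(1+x)^2)) (at x)" if "0 < x" for x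
    unfolding h_def using that
    by (auto intro!: derivative_eq_intros simp: field_simps power2_eq_square)
  have "h r \<le> h 1"
  proof (rule DERIV_nonneg_imp_nondecreasing[of r 1 h])
    fix x assume x: "r \<le> x" "x \<le> 1"
    then have "0 < x" using assms by auto
    show "\<exists>y. (h has_real_derivative y) (at x) \<and> 0 \<le> y"
    proof (intro exI conjI)
      show "(h has_real_derivative (1/x - 4/(1+x)^2)) (at x)" using d \<open>0<x\<close> .
      have e: "(1+x)^2 - 4*x = (1-x)^2" by (simp add: power2_eq_square algebra_simps)
      have "4*x \<le> (1+x)^2" using e zero_le_power2[of "1-x"] by linarith
      then have "4/(1+x)^2 \<le> 1/x" using \<open>0<x\<close> by (simp add: divide_simps)
      then show "0 \<le> 1/x - 4/(1+x)^2" by simp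
    qed
  qed (use assms in auto)
  then show ?thesis by (simp add: h_def)
qed

lemma deltaB:
  fixes \<beta> :: "nat \<Rightarrow> real"
  assumes pos: "\<And>n. \<beta> n > 0"
    and noninc: "\<And>n. \<beta> (Suc n) \<le> \<beta> n"
    and lim: "Liminf sequentially (\<lambda>n. ereal (root n (\<beta> n))) \<ge> 1"
    and C: "C \<ge> 1"
    and bound: "\<And>\<rho>. 0 < \<rho> \<Longrightarrow> \<rho> < 1 \<Longrightarrow> (\<Sum>k. \<rho>^k / \<beta> k) \<le> C * (\<Sum>k. (\<rho>^2)^k / \<beta> k)"
  shows "Delta2 \<beta>"
proof -
  have mono: "\<beta> m \<le> \<beta> n" if "n \<le> m" for n m
    using lift_Suc_antimono_le[of \<beta>, OF noninc that] .
  have gmono: "1 / \<beta> n \<le> 1 / \<beta> m" if "n \<le> m" for n m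
    using mono[OF that] pos[of n] pos[of m] by (simp add: frac_le)
  define \<delta> where "\<delta> = 1 / (16 * C^4)"
  have C4: "C^4 \<ge> 1" using C by simp
  have "1 < 16 * C^4" using C4 by simp
  then have d: "0 < \<delta>" "\<delta> < 1" by (auto simp: \<delta>_def divide_less_eq)
  have "\<beta> (2*n) \<ge> \<delta> * \<beta> n" for n
  proof (cases "n = 0")
    case True
    then show ?thesis using d pos[of 0] by simp
  next
    case False
    then have n: "0 < n" by simp
    define \<rho> where "\<rho> = root n (1/(2*C))"
    have r0: "0 < \<rho>" using C n by (simp add: \<rho>_def)
    have r1: "\<rho> < 1" using C n by (simp add: \<rho>_def)
    have rn: "\<rho>^n = 1/(2*C)" using C n by (simp add: \<rho>_def)
    define g where "g = (\<lambda>k. \<rho>^k / \<beta> k)"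
    define g2 where "g2 = (\<lambda>k. (\<rho>^2)^k / \<beta> k)"
    have sg: "summable g" unfolding g_def using sumA[OF pos lim, of \<rho>] r0 r1 by simp
    have sg2: "summable g2" unfolding g2_def using sumA[OF pos lim, of "\<rho>^2"] r0 r1
      by (simp add: power_less_one_iff)
    have gnn: "0 \<le> g k" for k using r0 pos[of k] by (simp add: g_def)
    have g2nn: "0 \<le> g2 k" for k using r0 pos[of k] by (simp add: g2_def)
    have split2: "suminf g2 = (\<Sum>k. g2 (k+n)) + (\<Sum>k<n. g2 k)"
      by (rule suminf_split_initial_segment[OF sg2])
    have split1: "suminf g = (\<Sum>k. g (k+n)) + (\<Sum>k<n. g k)"
      by (rule suminf_split_initial_segment[OF sg])
    have init: "(\<Sum>k<n. g2 k) \<le> real n / \<beta> n"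
    proof -
      have "(\<Sum>k<n. g2 k) \<le> (\<Sum>k<n. 1 / \<beta> n)"
      proof (rule sum_mono)
        fix k assume "k \<in> {..<n}"
        then have "1 / \<beta> k \<le> 1 / \<beta> n" using gmono[of k n] by simp
        moreover have "(\<rho>^2)^k \<le> 1" using r0 r1 by (simp add: power_le_one)
        ultimately have "(\<rho>^2)^k * (1 / \<beta> k) \<le> 1 * (1 / \<beta> n)"
          using pos[of k] by (intro mult_mono) auto
        then show "g2 k \<le> 1 / \<beta> n" unfolding g2_def by simp
      qed
      then show ?thesis by simp
    qed
    have tail: "(\<Sum>k. g2 (k+n)) \<le> \<rho>^n * suminf g"
    proof -
      have "(\<Sum>k. g2 (k+n)) \<le> (\<Sum>k. \<rho>^n * g (k+n))"
      proof (rule suminf_le)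
        fix k
        have "(\<rho>^2)^(k+n) = \<rho>^(2*(k+n))" by (simp only: power_mult)
        also have "2*(k+n) = n + (k+n) + k" by simp
        also have "\<rho>^(n + (k+n) + k) = \<rho>^n * (\<rho>^(k+n) * \<rho>^k)" by (simp add: power_add)
        also have "\<dots> \<le> \<rho>^n * \<rho>^(k+n)"
          using r0 r1 by (intro mult_left_mono) (auto simp: power_le_one mult_le_cancel_left1)
        finally show "g2 (k+n) \<le> \<rho>^n * g (k+n)" unfolding g2_def g_def
          using pos[of "k+n"] by (simp add: divide_right_mono)
      qed (auto intro: summable_ignore_initial_segment sg sg2 summable_mult)
      also have "\<dots> = \<rho>^n * (\<Sum>k. g (k+n))"
        by (rule suminf_mult[OF summable_ignore_initial_segment[OF sg]])
      also have "(\<Sum>k. g (k+n)) \<le> suminf g"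
        using split1 sum_nonneg[of "{..<n}" g] gnn by simp
      then have "\<rho>^n * (\<Sum>k. g (k+n)) \<le> \<rho>^n * suminf g" using r0 by simp
      finally show ?thesis .
    qed
    have "suminf g \<le> C * suminf g2" using bound[OF r0 r1] by (simp add: g_def g2_def)
    also have "\<dots> \<le> C * (real n / \<beta> n + \<rho>^n * suminf g)"
      using split2 init tail C by simp
    also have "\<dots> = C * real n / \<beta> n + suminf g / 2"
      using rn C by (simp add: algebra_simps)
    finally have up: "suminf g \<le> 2 * C * real n / \<beta> n" by simp
    have low: "real n * (\<rho>^(3*n) / \<beta> (2*n)) \<le> suminf g"
    proof -
      have "real n * (\<rho>^(3*n) / \<beta> (2*n)) = (\<Sum>k\<in>{2*n..<3*n}. \<rho>^(3*n) / \<beta> (2*n))" by simp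
      also have "\<dots> \<le> (\<Sum>k\<in>{2*n..<3*n}. g k)"
      proof (rule sum_mono)
        fix k assume k: "k \<in> {2*n..<3*n}"
        have "\<rho>^(3*n) \<le> \<rho>^k" using k r0 r1 by (intro power_decreasing) auto
        moreover have "1 / \<beta> (2*n) \<le> 1 / \<beta> k" using k gmono[of "2*n" k] by simp
        ultimately have "\<rho>^(3*n) * (1 / \<beta> (2*n)) \<le> \<rho>^k * (1 / \<beta> k)"
          using pos[of k] pos[of "2*n"] r0 by (intro mult_mono) auto
        then show "\<rho>^(3*n) / \<beta> (2*n) \<le> g k" unfolding g_def by simp
      qed
      also have "\<dots> \<le> suminf g" by (rule sum_le_suminf[OF sg]) (auto simp: gnn)
      finally show ?thesis .
    qed
    have r3: "\<rho>^(3*n) = 1 / (8 * C^3)"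
    proof -
      have "\<rho>^(3*n) = (\<rho>^n)^3" by (simp only: mult.commute[of 3 n] power_mult)
      also have "\<dots> = 1 / (8 * C^3)" using rn by (simp add: power_divide power_mult_distrib)
      finally show ?thesis .
    qed
    have e1: "\<rho>^(3*n) / \<beta> (2*n) = 1 / (8 * C^3 * \<beta> (2*n))" using r3 by simp
    have e2: "2 * C * real n / \<beta> n = real n * (2 * C / \<beta> n)" by simp
    have "real n * (1 / (8 * C^3 * \<beta> (2*n))) \<le> real n * (2 * C / \<beta> n)"
      using low up unfolding e1 e2 by linarith
    then have h: "1 / (8 * C^3 * \<beta> (2*n)) \<le> 2 * C / \<beta> n"
      by (rule mult_left_le_imp_le) (use n in simp)
    have p: "\<beta> n > 0" "\<beta> (2*n) > 0" using pos by auto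
    have pc: "8 * C^3 * \<beta> (2*n) > 0" using C p by simp
    from h have "\<beta> n * (1 / (8 * C^3 * \<beta> (2*n))) \<le> \<beta> n * (2 * C / \<beta> n)" using p by (intro mult_left_mono) auto
    then have "\<beta> n / (8 * C^3 * \<beta> (2*n)) \<le> 2 * C" using p by simp
    then have "\<beta> n \<le> 2 * C * (8 * C^3 * \<beta> (2*n))" using pc by (simp add: divide_le_eq)
    also have "\<dots> = 16 * C^4 * \<beta> (2*n)" by (simp add: power_def eval_nat_numeral)
    finally have "\<beta> n \<le> 16 * C^4 * \<beta> (2*n)" .
    then have "\<beta> n / (16 * C^4) \<le> \<beta> (2*n)" using C4 p by (simp add: divide_le_eq mult.commute)
    then show ?thesis by (simp add: \<delta>_def)
  qed
  then show ?thesis unfolding Delta2_def using d by blast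
qed



lemma evalE:
  fixes \<beta> :: "nat \<Rightarrow> real" and b :: "nat \<Rightarrow> complex" and z :: complex
  assumes pos: "\<And>n. \<beta> n > 0"
    and lim: "Liminf sequentially (\<lambda>n. ereal (root n (\<beta> n))) \<ge> 1"
    and sb: "summable (\<lambda>n. (cmod (b n))^2 * \<beta> n)"
    and z: "norm z < 1"
  shows "summable (\<lambda>n. norm (b n * z^n))"
    and "norm (\<Sum>n. b n * z^n) \<le> sqrt (\<Sum>n. (cmod (b n))^2 * \<beta> n) * sqrt (\<Sum>n. (norm z ^2)^n / \<beta> n)"
proof -
  define p where "p n = cmod (b n) * sqrt (\<beta> n)" for n
  define q where "q n = norm z ^ n * sqrt (1 / \<beta> n)" for n
  have pq: "p n * q n = norm (b n * z^n)" for n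
  proof -
    have "sqrt (\<beta> n) * sqrt (1 / \<beta> n) = 1" using pos[of n]
      by (simp add: real_sqrt_mult[symmetric])
    then show ?thesis unfolding p_def q_def
      by (simp add: norm_mult norm_power)
  qed
  have p2: "(p n)^2 = (cmod (b n))^2 * \<beta> n" for n
    using pos[of n] by (simp add: p_def power_mult_distrib)
  have zz: "(norm z ^ n)^2 = (norm z ^ 2)^n" for n
    by (metis power_mult mult.commute)
  have q2: "(q n)^2 = (norm z^2)^n / \<beta> n" for n
    using pos[of n] by (simp add: q_def power_mult_distrib zz)
  have sq: "summable (\<lambda>n. (q n)^2)"
    unfolding q2 using sumA[OF pos lim, of "norm z^2"] z by (simp add: power_less_one_iff)
  have sp: "summable (\<lambda>n. (p n)^2)" unfolding p2 by (rule sb)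
  have pnn: "0 \<le> p n" "0 \<le> q n" for n using pos[of n] by (auto simp: p_def q_def)
  note cs = CS_series[of p q, OF pnn sp sq]
  show s: "summable (\<lambda>n. norm (b n * z^n))" using cs(1) unfolding pq .
  have "norm (\<Sum>n. b n * z^n) \<le> (\<Sum>n. norm (b n * z^n))" by (rule summable_norm[OF s])
  also have "\<dots> = (\<Sum>n. p n * q n)" unfolding pq ..
  also have "\<dots> \<le> sqrt ((\<Sum>n. (p n)^2) * (\<Sum>n. (q n)^2))" by (rule real_le_rsqrt[OF cs(2)])
  also have "\<dots> = sqrt (\<Sum>n. (cmod (b n))^2 * \<beta> n) * sqrt (\<Sum>n. (norm z ^2)^n / \<beta> n)"
    unfolding p2 q2 by (simp add: real_sqrt_mult)
  finally show "norm (\<Sum>n. b n * z^n) \<le> sqrt (\<Sum>n. (cmod (b n))^2 * \<beta> n) * sqrt (\<Sum>n. (norm z ^2)^n / \<beta> n)" .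
qed

theorem mainTheorem20:
  fixes \<beta> :: "nat \<Rightarrow> real"
  assumes pos: "\<And>n. \<beta> n > 0"
    and noninc: "\<And>n. \<beta> (Suc n) \<le> \<beta> n"
    and liminf: "Liminf sequentially (\<lambda>n. ereal (root n (\<beta> n))) \<ge> 1"
    and maps: "\<forall>f\<in>H2 \<beta>. f \<circ> I1 \<in> H2 \<beta>"
  shows "Delta2 \<beta>"
proof (rule ccontr)
  assume nd: "\<not> Delta2 \<beta>"
  define G where "G x = (\<Sum>k. x^k / \<beta> k)" for x
  have sG: "summable (\<lambda>k. x^k / \<beta> k)" if "0 \<le> x" "x < 1" for x
    using sumA[OF pos liminf that] .
  have Gpos: "0 < G x" if "0 < x" "x < 1" for x
    unfolding G_def using that pos by (intro suminf_pos sG) auto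
  have key: "\<exists>\<rho>. 0 < \<rho> \<and> \<rho> < 1 \<and> C * G (\<rho>^2) < G \<rho>" if C: "C \<ge> 1" for C
  proof (rule ccontr)
    assume "\<not> ?thesis"
    then have "\<And>\<rho>. 0 < \<rho> \<Longrightarrow> \<rho> < 1 \<Longrightarrow> G \<rho> \<le> C * G (\<rho>^2)" by (metis not_less)
    then have "Delta2 \<beta>" using deltaB[OF pos noninc liminf C] by (simp add: G_def)
    with nd show False by simp
  qed
  have "\<forall>j. \<exists>\<rho>. 0 < \<rho> \<and> \<rho> < 1 \<and> (16::real)^j * G (\<rho>^2) < G \<rho>"
    using key by simp
  then obtain \<rho> where \<rho>: "\<And>j. 0 < \<rho> j" "\<And>j. \<rho> j < 1" "\<And>j. (16::real)^j * G (\<rho> j ^2) < G (\<rho> j)"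
    by metis
  define U where "U j = exp (- ((1 - \<rho> j) / (1 + \<rho> j)))" for j
  have U0: "0 < U j" for j by (simp add: U_def)
  have U1: "U j < 1" for j
  proof -
    have "0 < (1 - \<rho> j) / (1 + \<rho> j)" using \<rho>(1,2)[of j] by simp
    then show ?thesis by (simp add: U_def)
  qed
  have U21: "U j ^ 2 < 1" for j using U0[of j] U1[of j] by (simp add: power_less_one_iff)
  have Usq: "\<rho> j \<le> U j ^ 2" for j
  proof -
    have "U j ^ 2 = exp (- 2 * ((1 - \<rho> j) / (1 + \<rho> j)))"
      by (simp add: U_def power2_eq_square exp_add[symmetric])
    moreover have "ln (\<rho> j) \<le> - 2 * ((1 - \<rho> j) / (1 + \<rho> j))"
    proof -
      have "ln (\<rho> j) + 2 * ((1 - \<rho> j) / (1 + \<rho> j)) \<le> 0"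
        using logineq[of "\<rho> j"] \<rho>(1,2)[of j] by simp
      then show ?thesis by linarith
    qed
    ultimately show ?thesis using \<rho>(1)[of j]
      by (metis exp_le_cancel_iff exp_ln)
  qed
  have I1U: "I1 (- complex_of_real (\<rho> j)) = complex_of_real (U j)" for j
  proof -
    have "(1 + - complex_of_real (\<rho> j)) / (1 - - complex_of_real (\<rho> j))
        = complex_of_real ((1 - \<rho> j) / (1 + \<rho> j))" by simp
    note q = this
    have "I1 (- complex_of_real (\<rho> j)) = exp (- complex_of_real ((1 - \<rho> j) / (1 + \<rho> j)))"
      unfolding I1_def q ..
    also have "\<dots> = exp (complex_of_real (- ((1 - \<rho> j) / (1 + \<rho> j))))"
      by (simp only: of_real_minus)
    also have "\<dots> = complex_of_real (U j)" unfolding U_def by (rule exp_of_real)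
    finally show ?thesis .
  qed
  define s where "s j = G (U j ^ 2)" for j
  have s_pos: "0 < s j" for j unfolding s_def using U0[of j] U21[of j] by (intro Gpos) auto
  have sU: "G (\<rho> j) \<le> s j" for j
    unfolding s_def G_def
  proof (rule suminf_le)
    fix k
    have "\<rho> j ^ k \<le> (U j ^ 2) ^ k" using \<rho>(1)[of j] Usq[of j] by (intro power_mono) auto
    then show "\<rho> j ^ k / \<beta> k \<le> (U j ^ 2) ^ k / \<beta> k" using pos[of k] by (simp add: divide_right_mono)
  qed (use \<rho>(1,2) U21 U0 in \<open>auto intro!: sG simp: order_less_imp_le\<close>)
  have sbig: "(16::real)^j * G (\<rho> j ^2) < s j" for j using \<rho>(3)[of j] sU[of j] by simp
  define c where "c j = (1/2::real)^Suc j" for j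
  have c_sums: "c sums 1" unfolding c_def[abs_def] by (rule power_half_series)
  have c_sum: "summable c" using c_sums by (rule sums_summable)
  have c_pos: "0 < c j" for j by (simp add: c_def)
  define x where "x j n = U j ^ n / \<beta> n / sqrt (s j)" for j n
  have x_nn: "0 \<le> x j n" for j n using U0[of j] pos[of n] s_pos[of j] by (simp add: x_def)
  have x2: "(x j n)^2 * \<beta> n = (U j ^ 2)^n / \<beta> n / s j" for j n
  proof -
    have "(x j n)^2 = (U j ^ n)^2 / (\<beta> n)^2 / s j"
      using s_pos[of j] by (simp add: x_def power_divide power_mult_distrib less_imp_le)
    also have "(U j ^ n)^2 = (U j ^ 2)^n" by (metis power_mult mult.commute)
    finally show ?thesis using pos[of n] by (simp add: power2_eq_square field_simps)
  qed
  have xsum: "(\<lambda>n. (x j n)^2 * \<beta> n) sums 1" for j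
  proof -
    have "(\<lambda>n. (U j ^ 2)^n / \<beta> n / s j) sums (G (U j ^ 2) / s j)"
      unfolding G_def by (intro sums_divide summable_sums sG) (use U0[of j] U21[of j] in auto)
    then show ?thesis using s_pos[of j] unfolding x2 by (simp add: s_def)
  qed
  have xle: "(x j n)^2 \<le> 1 / \<beta> n" for j n
  proof -
    have "(\<Sum>i\<in>{n}. (x j i)^2 * \<beta> i) \<le> (\<Sum>i. (x j i)^2 * \<beta> i)"
      by (rule sum_le_suminf[OF sums_summable[OF xsum]]) (simp_all, metis mult_nonneg_nonneg zero_le_power2 pos less_imp_le)
    then have "(x j n)^2 * \<beta> n \<le> 1" using xsum[of j] by (simp add: sums_iff)
    then show ?thesis using pos[of n] by (simp add: le_divide_eq)
  qed
  have xle2: "x j n \<le> sqrt (1 / \<beta> n)" for j n by (rule real_le_rsqrt[OF xle])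
  have sa: "summable (\<lambda>j. c j * x j n)" for n
  proof (rule summable_comparison_test'[OF summable_mult2[OF c_sum, of "sqrt (1 / \<beta> n)"], of 0])
    fix j
    have "norm (c j * x j n) = c j * x j n" using x_nn[of j n] c_pos[of j] by simp
    also have "\<dots> \<le> c j * sqrt (1 / \<beta> n)"
      by (rule mult_left_mono[OF xle2]) (use c_pos[of j] in simp)
    finally show "norm (c j * x j n) \<le> c j * sqrt (1 / \<beta> n)" .
  qed
  define a where "a n = (\<Sum>j. c j * x j n)" for n
  have a_nn: "0 \<le> a n" for n unfolding a_def
    by (intro suminf_nonneg sa) (metis mult_nonneg_nonneg c_pos x_nn less_imp_le)
  have a_ge: "c j * x j n \<le> a n" for j n
  proof -
    have "(\<Sum>i\<in>{j}. c i * x i n) \<le> a n" unfolding a_def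
      by (rule sum_le_suminf[OF sa]) (simp_all, metis mult_nonneg_nonneg c_pos x_nn less_imp_le)
    then show ?thesis by simp
  qed
  have scx: "summable (\<lambda>j. c j * (x j n)^2)" for n
  proof (rule summable_comparison_test'[OF summable_mult2[OF c_sum, of "1 / \<beta> n"], of 0])
    fix j
    have "norm (c j * (x j n)^2) = c j * (x j n)^2" using c_pos[of j] by simp
    also have "\<dots> \<le> c j * (1 / \<beta> n)"
      by (rule mult_left_mono[OF xle]) (use c_pos[of j] in simp)
    finally show "norm (c j * (x j n)^2) \<le> c j * (1 / \<beta> n)" .
  qed
  have a_sq: "(a n)^2 \<le> (\<Sum>j. c j * (x j n)^2)" for n
  proof -
    define P where "P j = sqrt (c j)" for j
    define Q where "Q j = sqrt (c j) * x j n" for j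
    have PQ: "P j * Q j = c j * x j n" for j using c_pos[of j] by (simp add: P_def Q_def)
    have P2: "(P j)^2 = c j" for j using c_pos[of j] by (simp add: P_def)
    have Q2: "(Q j)^2 = c j * (x j n)^2" for j using c_pos[of j] by (simp add: Q_def power_mult_distrib)
    have P0: "0 \<le> P j" for j using c_pos[of j] by (simp add: P_def)
    have Q0: "0 \<le> Q j" for j using x_nn[of j n] c_pos[of j] by (simp add: Q_def)
    have sP: "summable (\<lambda>j. (P j)^2)" unfolding P2 by (rule c_sum)
    have sQ: "summable (\<lambda>j. (Q j)^2)" unfolding Q2 by (rule scx)
    have "(\<Sum>j. P j * Q j)^2 \<le> (\<Sum>j. (P j)^2) * (\<Sum>j. (Q j)^2)"
      by (rule CS_series(2)[OF P0 Q0 sP sQ])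
    then show ?thesis unfolding PQ P2 Q2 using c_sums by (simp add: sums_iff a_def)
  qed
  have sumsq: "summable (\<lambda>n. (a n)^2 * \<beta> n)"
  proof (rule summableI_nonneg_bounded)
    fix n show "0 \<le> (a n)^2 * \<beta> n" using pos[of n] by simp
  next
    fix N
    have "(\<Sum>n<N. (a n)^2 * \<beta> n) \<le> (\<Sum>n<N. (\<Sum>j. c j * (x j n)^2) * \<beta> n)"
      by (rule sum_mono) (use a_sq pos in \<open>auto intro: mult_right_mono less_imp_le\<close>)
    also have "\<dots> = (\<Sum>n<N. (\<Sum>j. c j * (x j n)^2 * \<beta> n))"
      by (rule sum.cong[OF refl]) (rule suminf_mult2[OF scx])
    also have "\<dots> = (\<Sum>j. (\<Sum>n<N. c j * (x j n)^2 * \<beta> n))"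
      by (rule suminf_sum[symmetric]) (rule summable_mult2[OF scx])
    also have "\<dots> \<le> (\<Sum>j. c j)"
    proof (rule suminf_le)
      fix j
      have "(\<Sum>n<N. (x j n)^2 * \<beta> n) \<le> (\<Sum>n. (x j n)^2 * \<beta> n)"
        by (rule sum_le_suminf[OF sums_summable[OF xsum[of j]]]) (simp_all, metis mult_nonneg_nonneg zero_le_power2 pos less_imp_le)
      then have "(\<Sum>n<N. (x j n)^2 * \<beta> n) \<le> 1"
        using xsum[of j] by (simp add: sums_iff)
      then have "c j * (\<Sum>n<N. (x j n)^2 * \<beta> n) \<le> c j * 1"
        using c_pos[of j] by (intro mult_left_mono) auto
      then show "(\<Sum>n<N. c j * (x j n)^2 * \<beta> n) \<le> c j"
        by (simp add: sum_distrib_left mult.assoc)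
    next
      show "summable (\<lambda>j. \<Sum>n<N. c j * (x j n)^2 * \<beta> n)"
        by (intro summable_sum) (rule summable_mult2[OF scx])
    qed (rule c_sum)
    also have "\<dots> = 1" using c_sums by (simp add: sums_iff)
    finally show "(\<Sum>n<N. (a n)^2 * \<beta> n) \<le> 1" .
  qed
  define f where "f z = (\<Sum>n. complex_of_real (a n) * z^n)" for z
  have sb_a: "summable (\<lambda>n. (cmod (complex_of_real (a n)))^2 * \<beta> n)"
    using sumsq a_nn by simp
  have fH: "f \<in> H2 \<beta>"
    unfolding H2_def
  proof (intro CollectI exI[of _ "\<lambda>n. complex_of_real (a n)"] conjI ballI)
    show "summable (\<lambda>n. (cmod (complex_of_real (a n)))^2 * \<beta> n)" by (rule sb_a)
  next
    fix z :: complex assume "z \<in> ball 0 1"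
    then have "norm z < 1" by simp
    from evalE(1)[OF pos liminf sb_a this]
    show "(\<lambda>n. complex_of_real (a n) * z^n) sums f z"
      unfolding f_def by (rule summable_sums[OF summable_norm_cancel])
  qed
  then have "f \<circ> I1 \<in> H2 \<beta>" using maps by blast
  then obtain b where sbb: "summable (\<lambda>n. (cmod (b n))^2 * \<beta> n)"
    and bs: "\<forall>z\<in>ball 0 1. (\<lambda>n. b n * z^n) sums (f \<circ> I1) z"
    unfolding H2_def by blast
  define M where "M = (\<Sum>n. (cmod (b n))^2 * \<beta> n)"
  have M_nn: "0 \<le> M" unfolding M_def
    by (rule suminf_nonneg[OF sbb]) (use pos in \<open>simp add: less_imp_le\<close>)
  have bound: "c j * sqrt (s j) \<le> sqrt M * sqrt (G (\<rho> j ^ 2))" for j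
  proof -
    define w where "w = - complex_of_real (\<rho> j)"
    have nw: "norm w = \<rho> j" using \<rho>(1)[of j] by (simp add: w_def)
    have "(\<lambda>n. b n * w^n) sums f (I1 w)" using bs nw \<rho>(2)[of j] by auto
    then have fw: "f (I1 w) = (\<Sum>n. b n * w^n)" by (simp add: sums_iff)
    have up: "norm (f (I1 w)) \<le> sqrt M * sqrt (G (\<rho> j ^ 2))"
      using evalE(2)[OF pos liminf sbb, of w] nw \<rho>(2)[of j] by (simp add: fw M_def G_def)
    have nU: "norm (complex_of_real (U j)) < 1" using U0[of j] U1[of j] by simp
    have sR: "summable (\<lambda>n. a n * U j ^ n)"
      using evalE(1)[OF pos liminf sb_a nU] a_nn U0[of j]
      by (simp add: norm_mult norm_power abs_mult)
    have fU: "f (I1 w) = complex_of_real (\<Sum>n. a n * U j ^ n)"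
    proof -
      have "complex_of_real (\<Sum>n. a n * U j ^ n) = (\<Sum>n. complex_of_real (a n * U j ^ n))"
        by (rule suminf_of_real[OF sR])
      then show ?thesis unfolding w_def I1U f_def by simp
    qed
    have lowR: "c j * sqrt (s j) \<le> (\<Sum>n. a n * U j ^ n)"
    proof -
      have e: "c j * x j n * U j ^ n = (c j / sqrt (s j)) * ((U j ^ 2)^n / \<beta> n)" for n
      proof -
        have ee: "(U j ^ 2) ^ n = U j ^ n * U j ^ n" by (simp add: power2_eq_square power_mult_distrib)
        show ?thesis using s_pos[of j] pos[of n] by (simp add: x_def ee field_simps)
      qed
      have sl: "summable (\<lambda>n. c j * x j n * U j ^ n)"
        unfolding e by (intro summable_mult sG) (use U0[of j] U21[of j] in auto)
      have "(\<Sum>n. c j * x j n * U j ^ n) = (c j / sqrt (s j)) * s j"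
        unfolding e s_def G_def by (rule suminf_mult[OF sG]) (use U0[of j] U21[of j] in auto)
      also have "\<dots> = c j * (s j / sqrt (s j))" by simp
      also have "\<dots> = c j * sqrt (s j)" using s_pos[of j] by (simp add: real_div_sqrt)
      finally have eq: "(\<Sum>n. c j * x j n * U j ^ n) = c j * sqrt (s j)" .
      have "(\<Sum>n. c j * x j n * U j ^ n) \<le> (\<Sum>n. a n * U j ^ n)"
        by (rule suminf_le[OF _ sl sR]) (use a_ge U0 in \<open>auto intro: mult_right_mono less_imp_le\<close>)
      then show ?thesis using eq by simp
    qed
    have "c j * sqrt (s j) \<le> norm (f (I1 w))" unfolding fU norm_of_real
      using lowR abs_ge_self[of "\<Sum>n. a n * U j ^ n"] by linarith
    then show ?thesis using up by linarith
  qed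
  have last: "(2::real)^j \<le> 2 * sqrt M" for j
  proof -
    have sq16: "sqrt ((16::real)^j) = 4^j"
    proof -
      have "(16::real)^j = (4^j)^2" by (induct j) (simp_all add: power_mult_distrib)
      then show ?thesis by simp
    qed
    have "G (\<rho> j ^ 2) \<le> s j / 16^j" using sbig[of j] by (subst le_divide_eq) (auto simp: mult.commute)
    then have "sqrt (G (\<rho> j ^ 2)) \<le> sqrt (s j) / 4^j"
      using sq16 by (metis real_sqrt_divide real_sqrt_le_iff)
    then have "sqrt M * sqrt (G (\<rho> j ^ 2)) \<le> sqrt M * (sqrt (s j) / 4^j)"
      using M_nn by (intro mult_left_mono) auto
    with bound[of j] have "c j * sqrt (s j) \<le> sqrt M * (sqrt (s j) / 4^j)" by linarith
    then have "c j * 4^j * sqrt (s j) \<le> sqrt M * sqrt (s j)"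
      by (simp add: field_simps)
    then have "c j * 4^j \<le> sqrt M" using s_pos[of j] by simp
    moreover have "c j * 4^j = 2^j / 2"
    proof -
      have "(4::real)^j = 2^j * 2^j" by (simp flip: power_mult_distrib)
      then show ?thesis by (simp add: c_def power_one_over field_simps)
    qed
    ultimately show ?thesis by simp
  qed
  obtain m :: nat where m: "2 * sqrt M < real m" using reals_Archimedean2 by blast
  have "real m < 2^m" using less_exp[of m] by (metis of_nat_less_iff of_nat_numeral of_nat_power)
  with m last[of m] show False by linarith
qed

end
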